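(* Let $n$ be such that $n/2$ is odd, let $\Omega\subseteq\mathbb{R}^n$ be open, let $\underline{f}$ be a vector-valued function on $\Omega$ and let $\lambda\in\mathbb{C}\setminus\{0\}$. With $A=M^{ie_N}\partial_{\underline{x}}^{-\underline{f}}$ and $B=M^{ie_N}\partial_{\underline{x}}^{\underline{f}}$ acting on (sufficiently smooth) $\mathbb{C}_n$-valued functions on $\Omega$, the following direct sum decompositions hold: (i) $\ker(A^2-\lambda^2)=\ker\left(\partial_{\underline{x}}-M^{\underline{f}+\lambda ie_N}\right)\oplus\ker\left(\partial_{\underline{x}}-M^{\underline{f}-\lambda ie_N}\right)$; (ii) $\ker(B^2-\lambda^2)=\ker\left(\partial_{\underline{x}}+M^{\underline{f}-\lambda ie_N}\right)\oplus\ker\left(\partial_{\underline{x}}+M^{\underline{f}+\lambda ie_N}\right)$.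
   Context: $\mathbb{R}_{0,n}$ is the real Clifford algebra generated by an orthonormal basis $e_1,\dots,e_n$ of $\mathbb{R}^n$ with relations $e_je_k+e_ke_j=-2\delta_{jk}$; $\mathbb{C}_n=\mathbb{R}_{0,n}\otimes\mathbb{C}$, with $i$ the complex unit. $e_N=e_1e_2\cdots e_n$ is the pseudo-scalar. The Dirac operator is $\partial_{\underline{x}}=\sum_{j=1}^n e_j\partial_{x_j}$, acting from the left. For a function $f$, $M^f$ is right multiplication: $M^fg=gf$; $\partial_{\underline{x}}^{\pm f}=\partial_{\underline{x}}\pm M^f$. *)

theory Defs
  imports "HOL-Analysis.Analysis"
begin

text \<open>Complex Clifford algebra C_n = R_{0,n} (x) C, where the basis vectors e_j of R^n
  are indexed by a finite linearly ordered type 'n (so n = CARD('n)).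
  An element is given by its coordinates with respect to the blade basis
  e_A = e_{j1} e_{j2} ... e_{jk} (j1 < j2 < ... < jk, A = {j1,...,jk}).\<close>

type_synonym 'n cl = "'n set \<Rightarrow> complex"

text \<open>Sign of the blade product: e_A e_B = cl_sign A B * e_(A symdiff B),
  using e_j e_k = - e_k e_j (j ~= k) and e_j^2 = -1.\<close>
definition cl_sign :: "'n::{finite,linorder} set \<Rightarrow> 'n set \<Rightarrow> complex" where
  "cl_sign A B = (-1) ^ (card {(a, b). a \<in> A \<and> b \<in> B \<and> b < a} + card (A \<inter> B))"

definition cl_mult :: "'n::{finite,linorder} cl \<Rightarrow> 'n cl \<Rightarrow> 'n cl" where
  "cl_mult a b = (\<lambda>C. \<Sum>A\<in>UNIV. \<Sum>B\<in>UNIV.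
       if (A - B) \<union> (B - A) = C then cl_sign A B * a A * b B else 0)"

definition cl_add :: "'n cl \<Rightarrow> 'n cl \<Rightarrow> 'n cl" where
  "cl_add a b = (\<lambda>A. a A + b A)"

definition cl_sub :: "'n cl \<Rightarrow> 'n cl \<Rightarrow> 'n cl" where
  "cl_sub a b = (\<lambda>A. a A - b A)"

definition cl_scale :: "complex \<Rightarrow> 'n cl \<Rightarrow> 'n cl" where
  "cl_scale c a = (\<lambda>A. c * a A)"

definition cl_zero :: "'n cl" where
  "cl_zero = (\<lambda>A. 0)"

definition cl_e :: "'n \<Rightarrow> 'n cl" where
  "cl_e j = (\<lambda>A. if A = {j} then 1 else 0)"

definition cl_eN :: "'n cl" where
  "cl_eN = (\<lambda>A. if A = UNIV then 1 else 0)"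

definition cl_vec :: "(real, 'n::finite) vec \<Rightarrow> 'n cl" where
  "cl_vec v = (\<lambda>A. if card A = 1 then complex_of_real (v $ (THE j. A = {j})) else 0)"

definition pd :: "'n::finite \<Rightarrow> ((real, 'n) vec \<Rightarrow> complex) \<Rightarrow> (real, 'n) vec \<Rightarrow> complex" where
  "pd j g x = vector_derivative (\<lambda>t. g (x + t *\<^sub>R axis j 1)) (at 0)"

fun iter_pd :: "'n::finite list \<Rightarrow> ((real, 'n) vec \<Rightarrow> complex) \<Rightarrow> (real, 'n) vec \<Rightarrow> complex" where
  "iter_pd [] g = g"
| "iter_pd (j # js) g = pd j (iter_pd js g)"

definition smooth_fun :: "((real, 'n::finite) vec) set \<Rightarrow> ((real, 'n) vec \<Rightarrow> complex) \<Rightarrow> bool" where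
  "smooth_fun \<Omega> g \<longleftrightarrow>
     (\<forall>js. continuous_on \<Omega> (iter_pd js g) \<and>
        (\<forall>j. \<forall>x\<in>\<Omega>. (\<lambda>t. iter_pd js g (x + t *\<^sub>R axis j 1)) differentiable (at 0)))"

definition cl_smooth :: "((real, 'n::finite) vec) set \<Rightarrow> ((real, 'n) vec \<Rightarrow> 'n cl) \<Rightarrow> bool" where
  "cl_smooth \<Omega> u \<longleftrightarrow> (\<forall>A. smooth_fun \<Omega> (\<lambda>x. u x A))"

definition vec_smooth :: "((real, 'n::finite) vec) set \<Rightarrow> ((real, 'n) vec \<Rightarrow> (real, 'n) vec) \<Rightarrow> bool" where
  "vec_smooth \<Omega> f \<longleftrightarrow> (\<forall>j. smooth_fun \<Omega> (\<lambda>x. complex_of_real (f x $ j)))"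

definition dirac :: "((real, 'n::{finite,linorder}) vec \<Rightarrow> 'n cl) \<Rightarrow> (real, 'n) vec \<Rightarrow> 'n cl" where
  "dirac u x = (\<lambda>C. \<Sum>j\<in>UNIV. cl_mult (cl_e j) (\<lambda>A. pd j (\<lambda>y. u y A) x) C)"

definition Mr :: "((real, 'n::{finite,linorder}) vec \<Rightarrow> 'n cl) \<Rightarrow> ((real, 'n) vec \<Rightarrow> 'n cl) \<Rightarrow> (real, 'n) vec \<Rightarrow> 'n cl" where
  "Mr g u = (\<lambda>x. cl_mult (u x) (g x))"

definition ieN :: "'n::{finite,linorder} cl" where
  "ieN = cl_scale \<i> cl_eN"

text \<open>A = M^{i e_N} (d - M^f),  B = M^{i e_N} (d + M^f)\<close>
definition opA :: "((real, 'n::{finite,linorder}) vec \<Rightarrow> (real, 'n) vec) \<Rightarrow> ((real, 'n) vec \<Rightarrow> 'n cl) \<Rightarrow> (real, 'n) vec \<Rightarrow> 'n cl" where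
  "opA f u = (\<lambda>x. cl_mult (cl_sub (dirac u x) (Mr (\<lambda>y. cl_vec (f y)) u x)) ieN)"

definition opB :: "((real, 'n::{finite,linorder}) vec \<Rightarrow> (real, 'n) vec) \<Rightarrow> ((real, 'n) vec \<Rightarrow> 'n cl) \<Rightarrow> (real, 'n) vec \<Rightarrow> 'n cl" where
  "opB f u = (\<lambda>x. cl_mult (cl_add (dirac u x) (Mr (\<lambda>y. cl_vec (f y)) u x)) ieN)"

definition ker_shift :: "((real, 'n::finite) vec) set \<Rightarrow> (((real, 'n) vec \<Rightarrow> 'n cl) \<Rightarrow> (real, 'n) vec \<Rightarrow> 'n cl)
     \<Rightarrow> complex \<Rightarrow> ((real, 'n) vec \<Rightarrow> 'n cl) set" where
  "ker_shift \<Omega> T c = {u. cl_smooth \<Omega> u \<and> (\<forall>x\<in>\<Omega>. T u x = cl_scale c (u x))}"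

definition ker_dirac_M :: "((real, 'n::{finite,linorder}) vec) set \<Rightarrow> complex \<Rightarrow> ((real, 'n) vec \<Rightarrow> 'n cl)
     \<Rightarrow> ((real, 'n) vec \<Rightarrow> 'n cl) set" where
  "ker_dirac_M \<Omega> s g = {u. cl_smooth \<Omega> u \<and>
      (\<forall>x\<in>\<Omega>. cl_add (dirac u x) (cl_scale s (Mr g u x)) = cl_zero)}"

text \<open>K is the direct sum of K1 and K2 (functions identified when they agree on Omega).\<close>
definition direct_sum_on :: "((real, 'n::finite) vec) set \<Rightarrow> ((real, 'n) vec \<Rightarrow> 'n cl) set
     \<Rightarrow> ((real, 'n) vec \<Rightarrow> 'n cl) set \<Rightarrow> ((real, 'n) vec \<Rightarrow> 'n cl) set \<Rightarrow> bool" where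
  "direct_sum_on \<Omega> K K1 K2 \<longleftrightarrow>
     K1 \<subseteq> K \<and> K2 \<subseteq> K \<and>
     (\<forall>u\<in>K. \<exists>u1\<in>K1. \<exists>u2\<in>K2. \<forall>x\<in>\<Omega>. u x = cl_add (u1 x) (u2 x)) \<and>
     (\<forall>u1\<in>K1. \<forall>u2\<in>K2. (\<forall>x\<in>\<Omega>. u1 x = u2 x) \<longrightarrow> (\<forall>x\<in>\<Omega>. u1 x = cl_zero))"

end

theory Submission
  imports Defs
begin



definition axd :: "((real, 'n::finite) vec) set \<Rightarrow> ((real, 'n) vec \<Rightarrow> complex) \<Rightarrow> bool" where
  "axd \<Omega> g \<longleftrightarrow> (\<forall>j. \<forall>x\<in>\<Omega>. (\<lambda>t. g (x + t *\<^sub>R axis j 1)) differentiable (at 0))"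

lemma smooth_fun_iff: "smooth_fun \<Omega> g \<longleftrightarrow> (\<forall>js. continuous_on \<Omega> (iter_pd js g) \<and> axd \<Omega> (iter_pd js g))"
  unfolding smooth_fun_def axd_def by blast

lemma ev_line:
  fixes x :: "(real, 'n::finite) vec"
  assumes "open \<Omega>" "x \<in> \<Omega>" "\<forall>y\<in>\<Omega>. g y = h y"
  shows "eventually (\<lambda>t. g (x + t *\<^sub>R axis j 1) = h (x + t *\<^sub>R axis j 1)) (nhds (0::real))"
proof -
  have "open ((\<lambda>t::real. x + t *\<^sub>R axis j 1) -` \<Omega>)"
    by (rule open_vimage[OF assms(1)]) (intro continuous_intros)
  then have "eventually (\<lambda>t. t \<in> (\<lambda>t::real. x + t *\<^sub>R axis j 1) -` \<Omega>) (nhds 0)"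
    by (intro eventually_nhds_in_open) (use assms in auto)
  then have "eventually (\<lambda>t. x + t *\<^sub>R axis j 1 \<in> \<Omega>) (nhds 0)" by simp
  then show ?thesis by eventually_elim (use assms(3) in auto)
qed




lemma line_eq:
  fixes x :: "(real, 'n::finite) vec" and g h :: "(real, 'n) vec \<Rightarrow> complex"
  assumes "open \<Omega>" "x \<in> \<Omega>" "\<forall>y\<in>\<Omega>. g y = h y"
  shows "(\<lambda>D. ((\<lambda>t. g (x + t *\<^sub>R axis j 1)) has_vector_derivative D) (at 0)) =
         (\<lambda>D. ((\<lambda>t. h (x + t *\<^sub>R axis j 1)) has_vector_derivative D) (at 0))"
proof (rule ext)
  fix D :: complex
  have e: "eventually (\<lambda>t. t \<in> UNIV \<longrightarrow> g (x + t *\<^sub>R axis j 1) = h (x + t *\<^sub>R axis j 1)) (nhds (0::real))"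
    using ev_line[OF assms, of j] by simp
  have z: "g (x + 0 *\<^sub>R axis j 1) = h (x + 0 *\<^sub>R axis j 1)" using assms by simp
  show "((\<lambda>t. g (x + t *\<^sub>R axis j 1)) has_vector_derivative D) (at 0) =
         ((\<lambda>t. h (x + t *\<^sub>R axis j 1)) has_vector_derivative D) (at 0)"
    by (rule has_vector_derivative_cong_ev[OF e z])
qed

lemma pd_local:
  fixes x :: "(real, 'n::finite) vec" and g h :: "(real, 'n) vec \<Rightarrow> complex"
  assumes "open \<Omega>" "x \<in> \<Omega>" "\<forall>y\<in>\<Omega>. g y = h y"
  shows "pd j g x = pd j h x"
  unfolding pd_def vector_derivative_def line_eq[OF assms] ..

lemma diff_local:
  fixes x :: "(real, 'n::finite) vec" and g h :: "(real, 'n) vec \<Rightarrow> complex"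
  assumes "open \<Omega>" "x \<in> \<Omega>" "\<forall>y\<in>\<Omega>. g y = h y"
   and "(\<lambda>t. g (x + t *\<^sub>R axis j 1)) differentiable (at 0)"
  shows "(\<lambda>t. h (x + t *\<^sub>R axis j 1)) differentiable (at 0)"
proof -
  have "((\<lambda>t. g (x + t *\<^sub>R axis j 1)) has_vector_derivative vector_derivative (\<lambda>t. g (x + t *\<^sub>R axis j 1)) (at 0)) (at 0)"
    using assms(4) by (simp add: vector_derivative_works)
  then have "((\<lambda>t. h (x + t *\<^sub>R axis j 1)) has_vector_derivative vector_derivative (\<lambda>t. g (x + t *\<^sub>R axis j 1)) (at 0)) (at 0)"
    using fun_cong[OF line_eq[OF assms(1-3), of j]] by simp
  then show ?thesis by (rule differentiableI_vector)
qed

lemma axd_local: "open \<Omega> \<Longrightarrow> \<forall>y\<in>\<Omega>. g y = h y \<Longrightarrow> axd \<Omega> g \<Longrightarrow> axd \<Omega> h"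
  unfolding axd_def by (metis diff_local)

lemma iter_pd_local: "open \<Omega> \<Longrightarrow> \<forall>y\<in>\<Omega>. g y = h y \<Longrightarrow> \<forall>y\<in>\<Omega>. iter_pd js g y = iter_pd js h y"
proof (induction js)
  case Nil then show ?case by simp
next
  case (Cons j js)
  then have "\<forall>y\<in>\<Omega>. iter_pd js g y = iter_pd js h y" by blast
  then show ?case using pd_local[OF Cons.prems(1)] by simp
qed

lemma iter_pd_snoc: "iter_pd (js @ [j]) g = iter_pd js (pd j g)"
  by (induction js) auto



lemma pd_lin:
  fixes x :: "(real, 'n::finite) vec" and g h :: "(real, 'n) vec \<Rightarrow> complex"
  assumes "(\<lambda>t. g (x + t *\<^sub>R axis j 1)) differentiable (at 0)"
    "(\<lambda>t. h (x + t *\<^sub>R axis j 1)) differentiable (at 0)"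
  shows "pd j (\<lambda>y. a * g y + b * h y) x = a * pd j g x + b * pd j h x"
  unfolding pd_def
  by (intro vector_derivative_at derivative_intros assms[unfolded vector_derivative_works])

lemma pd_add:
  fixes x :: "(real, 'n::finite) vec" and g h :: "(real, 'n) vec \<Rightarrow> complex"
  assumes "(\<lambda>t. g (x + t *\<^sub>R axis j 1)) differentiable (at 0)"
    "(\<lambda>t. h (x + t *\<^sub>R axis j 1)) differentiable (at 0)"
  shows "pd j (\<lambda>y. g y + h y) x = pd j g x + pd j h x"
  unfolding pd_def
  by (intro vector_derivative_at derivative_intros assms[unfolded vector_derivative_works])

lemma pd_mult:
  fixes x :: "(real, 'n::finite) vec" and g h :: "(real, 'n) vec \<Rightarrow> complex"
  assumes "(\<lambda>t. g (x + t *\<^sub>R axis j 1)) differentiable (at 0)"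
    "(\<lambda>t. h (x + t *\<^sub>R axis j 1)) differentiable (at 0)"
  shows "pd j (\<lambda>y. g y * h y) x = pd j g x * h x + g x * pd j h x"
proof -
  have "((\<lambda>t. g (x + t *\<^sub>R axis j 1) * h (x + t *\<^sub>R axis j 1)) has_vector_derivative
     (g (x + 0 *\<^sub>R axis j 1) * pd j h x + pd j g x * h (x + 0 *\<^sub>R axis j 1))) (at 0)"
    unfolding pd_def
    by (intro has_vector_derivative_mult assms[unfolded vector_derivative_works])
  then show ?thesis unfolding pd_def by (simp add: vector_derivative_at algebra_simps)
qed

lemma axd_add: "axd \<Omega> g \<Longrightarrow> axd \<Omega> h \<Longrightarrow> axd \<Omega> (\<lambda>y. g y + h y)"
  unfolding axd_def by (auto intro: differentiable_add)

lemma axd_mult: "axd \<Omega> g \<Longrightarrow> axd \<Omega> h \<Longrightarrow> axd \<Omega> (\<lambda>y. g y * h y)"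
  unfolding axd_def by (auto intro: differentiable_mult)




lemma sum_single: "finite S \<Longrightarrow> x \<in> S \<Longrightarrow> (\<And>y. y \<in> S \<Longrightarrow> y \<noteq> x \<Longrightarrow> g y = 0) \<Longrightarrow> sum g S = g x"
  by (metis (mono_tags, lifting) DiffE add.right_neutral singletonI sum.neutral sum.remove)

lemma cl_mult_add_left: "cl_mult (cl_add p q) c = cl_add (cl_mult p c) (cl_mult q c)"
  unfolding cl_mult_def cl_add_def
  by (auto simp: sum.distrib[symmetric] algebra_simps intro!: ext sum.cong)

lemma cl_mult_add_right: "cl_mult c (cl_add p q) = cl_add (cl_mult c p) (cl_mult c q)"
  unfolding cl_mult_def cl_add_def
  by (auto simp: sum.distrib[symmetric] algebra_simps intro!: ext sum.cong)

lemma cl_mult_scale_left: "cl_mult (cl_scale a p) c = cl_scale a (cl_mult p c)"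
  unfolding cl_mult_def cl_scale_def
  by (auto simp: sum_distrib_left algebra_simps intro!: ext sum.cong)

lemma cl_mult_scale_right: "cl_mult c (cl_scale a p) = cl_scale a (cl_mult c p)"
  unfolding cl_mult_def cl_scale_def
  by (auto simp: sum_distrib_left algebra_simps intro!: ext sum.cong)



lemma cl_sub_eq: "cl_sub a b = cl_add a (cl_scale (-1) b)"
  unfolding cl_sub_def cl_add_def cl_scale_def by auto

lemma cl_scale_1: "cl_scale 1 a = a"
  unfolding cl_scale_def by auto

lemma cl_mult_ieN: "cl_mult a ieN = (\<lambda>C. \<i> * cl_sign (-C) UNIV * a (-C))"
proof
  fix C
  have inner: "(\<Sum>B\<in>UNIV. if (A - B) \<union> (B - A) = C then cl_sign A B * a A * ieN B else 0)
      = (if -A = C then \<i> * cl_sign A UNIV * a A else 0)" for A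
    by (subst sum_single[where x=UNIV]) (auto simp: ieN_def cl_scale_def cl_eN_def Compl_eq_Diff_UNIV)
  show "cl_mult a ieN C = \<i> * cl_sign (-C) UNIV * a (-C)"
    unfolding cl_mult_def inner
    by (subst sum_single[where x="-C"]) auto
qed



lemma card_lt_pairs: "2 * card {(a::'n::{finite,linorder}, b::'n). b < a} + CARD('n) = CARD('n) * CARD('n)"
proof -
  let ?P = "{(a::'n, b::'n). b < a}"
  let ?Q = "{(a::'n, b::'n). a < b}"
  let ?D = "{(a::'n, b::'n). a = b}"
  have U: "(UNIV :: ('n\<times>'n) set) = ?P \<union> ?Q \<union> ?D" by (auto simp: not_less_iff_gr_or_eq)
  have "card (UNIV :: ('n\<times>'n) set) = card ?P + card ?Q + card ?D"
    unfolding U by (subst card_Un_disjoint, auto)+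
  moreover have "card ?Q = card ?P"
  proof -
    have "?Q = (\<lambda>(a,b). (b,a)) ` ?P" by auto
    moreover have "inj_on (\<lambda>(a,b). (b,a)) ?P" by (auto simp: inj_on_def)
    ultimately show ?thesis by (simp add: card_image)
  qed
  moreover have "card ?D = CARD('n)"
  proof -
    have "?D = (\<lambda>a. (a,a)) ` UNIV" by auto
    moreover have "inj (\<lambda>a::'n. (a,a))" by (auto simp: inj_on_def)
    ultimately show ?thesis by (simp add: card_image)
  qed
  ultimately show ?thesis by (simp add: card_cartesian_product)
qed



lemma sign_compl:
  assumes "even CARD('n)" "odd (CARD('n) div 2)"
  shows "cl_sign (-C) (UNIV::'n::{finite,linorder} set) * cl_sign C UNIV = -1"
proof -
  let ?P = "{(a::'n, b::'n). b < a}"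
  let ?X = "{(a, b). a \<in> -C \<and> b \<in> (UNIV::'n set) \<and> b < a}"
  let ?Y = "{(a, b). a \<in> C \<and> b \<in> (UNIV::'n set) \<and> b < a}"
  have "card (?X \<union> ?Y) = card ?X + card ?Y" by (rule card_Un_disjoint) auto
  moreover have "?X \<union> ?Y = ?P" by auto
  ultimately have c1: "card ?X + card ?Y = card ?P" by simp
  have "card (-C \<union> C) = card (-C) + card C" by (rule card_Un_disjoint) auto
  moreover have "-C \<union> C = UNIV" by auto
  ultimately have c2: "card (-C \<inter> UNIV) + card (C \<inter> UNIV) = CARD('n)" by simp
  obtain m where m1: "CARD('n) = 2 * m" using assms(1) by (rule evenE)
  have m2: "odd m" using assms(2) m1 by simp
  have "2 * (card ?P + CARD('n)) = CARD('n) * (CARD('n) + 1)" using card_lt_pairs[where 'n='n] by (simp add: algebra_simps)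
  then have "card ?P + CARD('n) = m * (2 * m + 1)" unfolding m1 by (simp add: algebra_simps)
  then have od: "odd (card ?P + CARD('n))" using m2 by simp
  have "cl_sign (-C) (UNIV::'n set) * cl_sign C UNIV = (-1) ^ (card ?X + card (-C \<inter> UNIV) + (card ?Y + card (C \<inter> UNIV)))"
    unfolding cl_sign_def power_add[symmetric] by simp
  also have "card ?X + card (-C \<inter> UNIV) + (card ?Y + card (C \<inter> UNIV)) = card ?P + CARD('n)"
    using c1 c2 by linarith
  finally show ?thesis using od by simp
qed


lemma ieN_ieN:
  assumes "even CARD('n)" "odd (CARD('n) div 2)"
  shows "cl_mult (cl_mult a ieN) (ieN::'n::{finite,linorder} cl) = a"
proof
  fix C
  have "cl_mult (cl_mult a ieN) ieN C = (\<i> * \<i>) * (cl_sign (-C) UNIV * cl_sign C UNIV) * a C"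
    unfolding cl_mult_ieN by (simp add: algebra_simps)
  also have "\<dots> = a C" using sign_compl[OF assms, of C] by simp
  finally show "cl_mult (cl_mult a ieN) ieN C = a C" .
qed




lemma iter_pd_add_bounded:
  assumes "open \<Omega>"
  shows "(\<forall>ks. length ks < length js \<longrightarrow> axd \<Omega> (iter_pd ks g) \<and> axd \<Omega> (iter_pd ks h)) \<Longrightarrow>
    \<forall>x\<in>\<Omega>. iter_pd js (\<lambda>y. g y + h y) x = iter_pd js g x + iter_pd js h x"
proof (induction js)
  case Nil then show ?case by simp
next
  case (Cons j js)
  then have IH: "\<forall>x\<in>\<Omega>. iter_pd js (\<lambda>y. g y + h y) x = iter_pd js g x + iter_pd js h x" by auto
  have ax: "axd \<Omega> (iter_pd js g)" "axd \<Omega> (iter_pd js h)" using Cons.prems by auto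
  show ?case
  proof
    fix x assume x: "x \<in> \<Omega>"
    have "iter_pd (j # js) (\<lambda>y. g y + h y) x = pd j (\<lambda>y. iter_pd js g y + iter_pd js h y) x"
      using pd_local[OF assms x IH] by simp
    also have "\<dots> = pd j (iter_pd js g) x + pd j (iter_pd js h) x"
      by (rule pd_add) (use ax x in \<open>auto simp: axd_def\<close>)
    finally show "iter_pd (j # js) (\<lambda>y. g y + h y) x = iter_pd (j # js) g x + iter_pd (j # js) h x" by simp
  qed
qed

lemma smooth_add:
  assumes "open \<Omega>" "smooth_fun \<Omega> g" "smooth_fun \<Omega> h"
  shows "smooth_fun \<Omega> (\<lambda>y. g y + h y)"
  unfolding smooth_fun_iff
proof
  fix js
  have e: "\<forall>x\<in>\<Omega>. iter_pd js g x + iter_pd js h x = iter_pd js (\<lambda>y. g y + h y) x"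
    using iter_pd_add_bounded[OF assms(1), of js g h] assms(2,3) by (auto simp: smooth_fun_iff)
  have c: "continuous_on \<Omega> (\<lambda>x. iter_pd js g x + iter_pd js h x)"
    using assms(2,3) by (intro continuous_on_add) (auto simp: smooth_fun_iff)
  have a: "axd \<Omega> (\<lambda>x. iter_pd js g x + iter_pd js h x)"
    using assms(2,3) by (intro axd_add) (auto simp: smooth_fun_iff)
  show "continuous_on \<Omega> (iter_pd js (\<lambda>y. g y + h y)) \<and> axd \<Omega> (iter_pd js (\<lambda>y. g y + h y))"
    using continuous_on_eq[OF c, of "iter_pd js (\<lambda>y. g y + h y)"] e axd_local[OF assms(1) e a] by simp
qed

lemma iter_pd_const: "iter_pd js (\<lambda>_. c) = (if js = [] then (\<lambda>_. c) else (\<lambda>_. 0))"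
proof (induction js)
  case Nil then show ?case by simp
next
  case (Cons j js)
  have "pd j (\<lambda>_. c) = (\<lambda>_. 0)" "pd j (\<lambda>_. 0) = (\<lambda>_. 0)" by (auto simp: pd_def)
  then show ?case using Cons by simp
qed

lemma smooth_const: "smooth_fun \<Omega> (\<lambda>_. c)"
  unfolding smooth_fun_iff axd_def iter_pd_const by auto

lemma smooth_pd: "smooth_fun \<Omega> g \<Longrightarrow> smooth_fun \<Omega> (pd j g)"
  unfolding smooth_fun_iff by (metis iter_pd_snoc)

lemma smooth_mult_aux:
  fixes \<Omega> :: "(real, 'n::finite) vec set"
  assumes "open \<Omega>"
  shows "\<forall>g h. smooth_fun \<Omega> g \<longrightarrow> smooth_fun \<Omega> h \<longrightarrow> (\<forall>js. length js \<le> n \<longrightarrow>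
     continuous_on \<Omega> (iter_pd js (\<lambda>y. g y * h y)) \<and> axd \<Omega> (iter_pd js (\<lambda>y. g y * h y)))"
proof (induction n)
  case 0
  show ?case
  proof (intro allI impI)
    fix g h and js :: "'n list" assume g: "smooth_fun \<Omega> g" and h: "smooth_fun \<Omega> h" and "length js \<le> 0"
    then have "js = []" by simp
    moreover have "continuous_on \<Omega> (\<lambda>y. g y * h y)" using g h
      by (intro continuous_on_mult) (auto simp: smooth_fun_iff dest: spec[of _ "[]"])
    moreover have "axd \<Omega> (\<lambda>y. g y * h y)" using g h
      by (intro axd_mult) (auto simp: smooth_fun_iff dest: spec[of _ "[]"])
    ultimately show "continuous_on \<Omega> (iter_pd js (\<lambda>y. g y * h y)) \<and> axd \<Omega> (iter_pd js (\<lambda>y. g y * h y))" by simp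
  qed
next
  case (Suc n)
  show ?case
  proof (intro allI impI)
    fix g h and js :: "'n list" assume g: "smooth_fun \<Omega> g" and h: "smooth_fun \<Omega> h" and len: "length js \<le> Suc n"
    show "continuous_on \<Omega> (iter_pd js (\<lambda>y. g y * h y)) \<and> axd \<Omega> (iter_pd js (\<lambda>y. g y * h y))"
    proof (cases "length js \<le> n")
      case True then show ?thesis using Suc.IH g h by blast
    next
      case False
      then have "js \<noteq> []" by auto
      then obtain js' j where js: "js = js' @ [j]" by (metis rev_exhaust)
      with len False have ljs: "length js' = n" by simp
      define p1 where "p1 = (\<lambda>y. pd j g y * h y)"
      define p2 where "p2 = (\<lambda>y. g y * pd j h y)"
      have IH1: "\<forall>ks. length ks \<le> n \<longrightarrow> continuous_on \<Omega> (iter_pd ks p1) \<and> axd \<Omega> (iter_pd ks p1)"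
        unfolding p1_def using Suc.IH smooth_pd[OF g] h by blast
      have IH2: "\<forall>ks. length ks \<le> n \<longrightarrow> continuous_on \<Omega> (iter_pd ks p2) \<and> axd \<Omega> (iter_pd ks p2)"
        unfolding p2_def using Suc.IH smooth_pd[OF h] g by blast
      have axg: "axd \<Omega> g" "axd \<Omega> h" using g h by (auto simp: smooth_fun_iff dest: spec[of _ "[]"])
      have e1: "\<forall>y\<in>\<Omega>. pd j (\<lambda>y. g y * h y) y = p1 y + p2 y"
        unfolding p1_def p2_def using axg by (auto simp: axd_def pd_mult)
      have e2: "\<forall>y\<in>\<Omega>. iter_pd js' (pd j (\<lambda>y. g y * h y)) y = iter_pd js' (\<lambda>y. p1 y + p2 y) y"
        by (rule iter_pd_local[OF assms e1])
      have e3: "\<forall>y\<in>\<Omega>. iter_pd js' (\<lambda>y. p1 y + p2 y) y = iter_pd js' p1 y + iter_pd js' p2 y"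
        by (rule iter_pd_add_bounded[OF assms]) (use IH1 IH2 ljs in auto)
      have e: "\<forall>y\<in>\<Omega>. iter_pd js' p1 y + iter_pd js' p2 y = iter_pd js (\<lambda>y. g y * h y) y"
        using e2 e3 unfolding js iter_pd_snoc by simp
      have c: "continuous_on \<Omega> (\<lambda>y. iter_pd js' p1 y + iter_pd js' p2 y)"
        using IH1 IH2 ljs by (intro continuous_on_add) auto
      have a: "axd \<Omega> (\<lambda>y. iter_pd js' p1 y + iter_pd js' p2 y)"
        using IH1 IH2 ljs by (intro axd_add) auto
      show ?thesis using continuous_on_eq[OF c, of "iter_pd js (\<lambda>y. g y * h y)"] e axd_local[OF assms e a] by simp
    qed
  qed
qed

lemma smooth_mult:
  assumes "open \<Omega>" "smooth_fun \<Omega> g" "smooth_fun \<Omega> h"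
  shows "smooth_fun \<Omega> (\<lambda>y. g y * h y)"
  unfolding smooth_fun_iff using smooth_mult_aux[OF assms(1)] assms(2,3) by blast

lemma smooth_cmult: "open \<Omega> \<Longrightarrow> smooth_fun \<Omega> g \<Longrightarrow> smooth_fun \<Omega> (\<lambda>y. c * g y)"
  using smooth_mult[OF _ smooth_const] by blast

lemma smooth_sub:
  assumes "open \<Omega>" "smooth_fun \<Omega> g" "smooth_fun \<Omega> h"
  shows "smooth_fun \<Omega> (\<lambda>y. g y - h y)"
proof -
  have "(\<lambda>y. g y - h y) = (\<lambda>y. g y + (-1) * h y)" by auto
  then show ?thesis using smooth_add[OF assms(1,2) smooth_cmult[OF assms(1,3), of "-1"]] by simp
qed

lemma smooth_sum:
  assumes "open \<Omega>" "finite I"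
  shows "(\<forall>i\<in>I. smooth_fun \<Omega> (g i)) \<Longrightarrow> smooth_fun \<Omega> (\<lambda>x. \<Sum>i\<in>I. g i x)"
  using assms(2)
proof (induction I rule: finite_induct)
  case empty then show ?case by (simp add: smooth_const)
next
  case (insert i I)
  then show ?case by (simp add: smooth_add[OF assms(1)])
qed

lemma smooth_if: "smooth_fun \<Omega> F \<Longrightarrow> smooth_fun \<Omega> (\<lambda>x. if P then F x else 0)"
  by (cases P) (simp_all add: smooth_const)




lemma cl_mult_smooth:
  assumes "open \<Omega>" "\<forall>A. smooth_fun \<Omega> (\<lambda>x. a x A)" "\<forall>B. smooth_fun \<Omega> (\<lambda>x. b x B)"
  shows "smooth_fun \<Omega> (\<lambda>x. cl_mult (a x) (b x) C)"
  unfolding cl_mult_def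
  by (intro smooth_sum[OF assms(1)] ballI smooth_if smooth_mult[OF assms(1)] smooth_const assms(2,3)[rule_format] finite)

lemma dirac_smooth:
  assumes "open \<Omega>" "cl_smooth \<Omega> u"
  shows "smooth_fun \<Omega> (\<lambda>x. dirac u x C)"
  unfolding dirac_def
  by (intro smooth_sum[OF assms(1)] ballI cl_mult_smooth[OF assms(1)] allI smooth_const smooth_pd
      assms(2)[unfolded cl_smooth_def, rule_format] finite)

lemma Mr_smooth:
  assumes "open \<Omega>" "cl_smooth \<Omega> u" "vec_smooth \<Omega> f"
  shows "smooth_fun \<Omega> (\<lambda>x. Mr (\<lambda>y. cl_vec (f y)) u x C)"
  unfolding Mr_def
  by (intro cl_mult_smooth[OF assms(1)] allI assms(2)[unfolded cl_smooth_def, rule_format])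
     (unfold cl_vec_def, intro smooth_if assms(3)[unfolded vec_smooth_def, rule_format])

lemma opA_smooth:
  assumes "open \<Omega>" "cl_smooth \<Omega> u" "vec_smooth \<Omega> f"
  shows "cl_smooth \<Omega> (opA f u)"
  unfolding cl_smooth_def opA_def
  by (intro allI cl_mult_smooth[OF assms(1)] smooth_const)
     (unfold cl_sub_def, intro smooth_sub[OF assms(1)] dirac_smooth[OF assms(1,2)] Mr_smooth[OF assms])

lemma opB_smooth:
  assumes "open \<Omega>" "cl_smooth \<Omega> u" "vec_smooth \<Omega> f"
  shows "cl_smooth \<Omega> (opB f u)"
  unfolding cl_smooth_def opB_def
  by (intro allI cl_mult_smooth[OF assms(1)] smooth_const)
     (unfold cl_add_def, intro smooth_add[OF assms(1)] dirac_smooth[OF assms(1,2)] Mr_smooth[OF assms])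

lemma lc_smooth:
  assumes "open \<Omega>" "cl_smooth \<Omega> u" "cl_smooth \<Omega> v"
  shows "cl_smooth \<Omega> (\<lambda>y. cl_add (cl_scale a (u y)) (cl_scale b (v y)))"
  unfolding cl_smooth_def cl_add_def cl_scale_def
  by (intro allI smooth_add[OF assms(1)] smooth_cmult[OF assms(1)] assms(2,3)[unfolded cl_smooth_def, rule_format])

lemma dirac_local:
  assumes "open \<Omega>" "x \<in> \<Omega>" "\<forall>y\<in>\<Omega>. u y = v y"
  shows "dirac u x = dirac v x"
proof -
  have "(\<lambda>A. pd j (\<lambda>y. u y A) x) = (\<lambda>A. pd j (\<lambda>y. v y A) x)" for j
    by (rule ext, rule pd_local[OF assms(1,2)]) (use assms(3) in auto)
  then show ?thesis unfolding dirac_def by simp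
qed



lemma dirac_lc:
  assumes "x \<in> \<Omega>" "cl_smooth \<Omega> u" "cl_smooth \<Omega> v"
  shows "dirac (\<lambda>y. cl_add (cl_scale a (u y)) (cl_scale b (v y))) x = cl_add (cl_scale a (dirac u x)) (cl_scale b (dirac v x))"
proof -
  have "(\<lambda>A. pd j (\<lambda>y. cl_add (cl_scale a (u y)) (cl_scale b (v y)) A) x) =
     cl_add (cl_scale a (\<lambda>A. pd j (\<lambda>y. u y A) x)) (cl_scale b (\<lambda>A. pd j (\<lambda>y. v y A) x))" for j
  proof
    fix A
    have "smooth_fun \<Omega> (\<lambda>y. u y A)" using assms(2) unfolding cl_smooth_def by blast
    then have "\<forall>j. \<forall>x\<in>\<Omega>. (\<lambda>t. iter_pd [] (\<lambda>y. u y A) (x + t *\<^sub>R axis j 1)) differentiable (at 0)"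
      unfolding smooth_fun_def by blast
    then have du: "(\<lambda>t. u (x + t *\<^sub>R axis j 1) A) differentiable (at 0)"
      using assms(1) by simp
    have "smooth_fun \<Omega> (\<lambda>y. v y A)" using assms(3) unfolding cl_smooth_def by blast
    then have "\<forall>j. \<forall>x\<in>\<Omega>. (\<lambda>t. iter_pd [] (\<lambda>y. v y A) (x + t *\<^sub>R axis j 1)) differentiable (at 0)"
      unfolding smooth_fun_def by blast
    then have dv: "(\<lambda>t. v (x + t *\<^sub>R axis j 1) A) differentiable (at 0)"
      using assms(1) by simp
    show "pd j (\<lambda>y. cl_add (cl_scale a (u y)) (cl_scale b (v y)) A) x =
     cl_add (cl_scale a (\<lambda>A. pd j (\<lambda>y. u y A) x)) (cl_scale b (\<lambda>A. pd j (\<lambda>y. v y A) x)) A"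
      unfolding cl_add_def cl_scale_def using pd_lin[OF du dv] by simp
  qed
  note eq = this
  show ?thesis
    apply (simp only: dirac_def eq cl_mult_add_right cl_mult_scale_right)
    apply (simp add: cl_add_def cl_scale_def sum.distrib sum_distrib_left)
    done
qed




definition Tg :: "complex \<Rightarrow> ((real, 'n::{finite,linorder}) vec \<Rightarrow> (real, 'n) vec) \<Rightarrow> ((real, 'n) vec \<Rightarrow> 'n cl) \<Rightarrow> (real, 'n) vec \<Rightarrow> 'n cl" where
  "Tg s f u = (\<lambda>x. cl_mult (cl_add (dirac u x) (cl_scale s (Mr (\<lambda>y. cl_vec (f y)) u x))) ieN)"

lemma opA_Tg: "opA f = Tg (-1) f"
  unfolding opA_def Tg_def cl_sub_eq ..

lemma opB_Tg: "opB f = Tg 1 f"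
  unfolding opB_def Tg_def cl_scale_1 ..

lemma Tg_smooth:
  assumes "open \<Omega>" "cl_smooth \<Omega> u" "vec_smooth \<Omega> f"
  shows "cl_smooth \<Omega> (Tg s f u)"
  unfolding cl_smooth_def Tg_def
  by (intro allI cl_mult_smooth[OF assms(1)] smooth_const)
     (unfold cl_add_def cl_scale_def, intro smooth_add[OF assms(1)] smooth_cmult[OF assms(1)] dirac_smooth[OF assms(1,2)] Mr_smooth[OF assms])

lemma Tg_local:
  assumes "open \<Omega>" "\<forall>y\<in>\<Omega>. u y = v y" "x \<in> \<Omega>"
  shows "Tg s f u x = Tg s f v x"
  unfolding Tg_def Mr_def using dirac_local[OF assms(1,3,2)] assms(2,3) by simp

lemma Tg_lc:
  assumes "x \<in> \<Omega>" "cl_smooth \<Omega> u" "cl_smooth \<Omega> v"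
  shows "Tg s f (\<lambda>y. cl_add (cl_scale a (u y)) (cl_scale b (v y))) x = cl_add (cl_scale a (Tg s f u x)) (cl_scale b (Tg s f v x))"
  apply (simp only: Tg_def Mr_def dirac_lc[OF assms] cl_mult_add_left cl_mult_scale_left)
  apply (rule ext)
  apply (simp add: cl_add_def cl_scale_def algebra_simps)
  done

lemma ker_iff:
  assumes "even CARD('n)" "odd (CARD('n) div 2)"
  shows "(cl_add D (cl_scale s (cl_mult w (cl_add F (cl_scale c (ieN::'n::{finite,linorder} cl))))) = cl_zero) \<longleftrightarrow>
         (cl_mult (cl_add D (cl_scale s (cl_mult w F))) ieN = cl_scale (-(s*c)) w)"
proof -
  define Q where "Q = cl_add D (cl_scale s (cl_mult w F))"
  have L: "cl_add D (cl_scale s (cl_mult w (cl_add F (cl_scale c ieN)))) = cl_add Q (cl_scale (s*c) (cl_mult w ieN))"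
    unfolding Q_def cl_mult_add_right cl_mult_scale_right by (rule ext) (simp add: cl_add_def cl_scale_def algebra_simps)
  have "cl_add Q (cl_scale (s*c) (cl_mult w ieN)) = cl_zero \<longleftrightarrow> Q = cl_scale (-(s*c)) (cl_mult w ieN)"
    unfolding cl_add_def cl_scale_def cl_zero_def fun_eq_iff by (auto simp: algebra_simps add_eq_0_iff)
  also have "\<dots> \<longleftrightarrow> cl_mult Q ieN = cl_scale (-(s*c)) w"
  proof
    assume "Q = cl_scale (-(s*c)) (cl_mult w ieN)"
    then show "cl_mult Q ieN = cl_scale (-(s*c)) w" by (simp add: cl_mult_scale_left ieN_ieN[OF assms])
  next
    assume "cl_mult Q ieN = cl_scale (-(s*c)) w"
    then have "cl_mult (cl_mult Q ieN) ieN = cl_scale (-(s*c)) (cl_mult w ieN)" by (simp add: cl_mult_scale_left)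
    then show "Q = cl_scale (-(s*c)) (cl_mult w ieN)" by (simp add: ieN_ieN[OF assms])
  qed
  finally show ?thesis unfolding L Q_def .
qed

lemma kerM_eq:
  assumes "even CARD('n)" "odd (CARD('n) div 2)"
  shows "ker_dirac_M \<Omega> s (\<lambda>x. cl_add (cl_vec (f x)) (cl_scale c (ieN::'n::{finite,linorder} cl))) = ker_shift \<Omega> (Tg s f) (-(s*c))"
  unfolding ker_dirac_M_def ker_shift_def Tg_def Mr_def ker_iff[OF assms] ..

lemma sub_to_add: "cl_sub F (cl_scale c E) = cl_add F (cl_scale (-c) E)"
  unfolding cl_sub_def cl_add_def cl_scale_def by auto




lemma cl_scale_scale: "cl_scale a (cl_scale b w) = cl_scale (a*b) w"
  unfolding cl_scale_def by (rule ext) simp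

lemma abstract_ds:
  fixes T :: "((real, 'n::{finite,linorder}) vec \<Rightarrow> 'n cl) \<Rightarrow> (real, 'n) vec \<Rightarrow> 'n cl"
  assumes opn: "open \<Omega>" and mu: "mu \<noteq> 0"
    and Tsm: "\<And>u. cl_smooth \<Omega> u \<Longrightarrow> cl_smooth \<Omega> (T u)"
    and Tlc: "\<And>u v a b x. cl_smooth \<Omega> u \<Longrightarrow> cl_smooth \<Omega> v \<Longrightarrow> x \<in> \<Omega> \<Longrightarrow>
        T (\<lambda>y. cl_add (cl_scale a (u y)) (cl_scale b (v y))) x = cl_add (cl_scale a (T u x)) (cl_scale b (T v x))"
    and Tloc: "\<And>u v x. \<forall>y\<in>\<Omega>. u y = v y \<Longrightarrow> x \<in> \<Omega> \<Longrightarrow> T u x = T v x"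
  shows "direct_sum_on \<Omega> (ker_shift \<Omega> (\<lambda>u. T (T u)) (mu^2)) (ker_shift \<Omega> T mu) (ker_shift \<Omega> T (-mu))"
proof -
  have sub: "ker_shift \<Omega> T m \<subseteq> ker_shift \<Omega> (\<lambda>u. T (T u)) (mu^2)" if m: "m*m = mu^2" for m
  proof
    fix u assume "u \<in> ker_shift \<Omega> T m"
    then have sm: "cl_smooth \<Omega> u" and ev: "\<And>x. x\<in>\<Omega> \<Longrightarrow> T u x = cl_scale m (u x)" unfolding ker_shift_def by blast+
    have "T (T u) x = cl_scale (mu^2) (u x)" if x: "x \<in> \<Omega>" for x
    proof -
      have e: "\<forall>y\<in>\<Omega>. T u y = cl_add (cl_scale m (u y)) (cl_scale 0 (u y))"
        using ev unfolding cl_add_def cl_scale_def by simp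
      have "T (T u) x = T (\<lambda>y. cl_add (cl_scale m (u y)) (cl_scale 0 (u y))) x" by (rule Tloc[OF e x])
      also have "\<dots> = cl_add (cl_scale m (T u x)) (cl_scale 0 (T u x))" by (rule Tlc[OF sm sm x])
      also have "\<dots> = cl_add (cl_scale m (cl_scale m (u x))) (cl_scale 0 (T u x))" by (simp only: ev[OF x])
      also have "\<dots> = cl_scale (mu^2) (u x)" unfolding cl_add_def cl_scale_def m[symmetric]
        by (rule ext) simp
      finally show ?thesis .
    qed
    then show "u \<in> ker_shift \<Omega> (\<lambda>u. T (T u)) (mu^2)" using sm unfolding ker_shift_def by blast
  qed
  have sub1: "ker_shift \<Omega> T mu \<subseteq> ker_shift \<Omega> (\<lambda>u. T (T u)) (mu^2)" by (rule sub) (simp add: power2_eq_square)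
  have sub2: "ker_shift \<Omega> T (-mu) \<subseteq> ker_shift \<Omega> (\<lambda>u. T (T u)) (mu^2)" by (rule sub) (simp add: power2_eq_square)
  have dec: "\<exists>u1\<in>ker_shift \<Omega> T mu. \<exists>u2\<in>ker_shift \<Omega> T (-mu). \<forall>x\<in>\<Omega>. u x = cl_add (u1 x) (u2 x)"
    if uK: "u \<in> ker_shift \<Omega> (\<lambda>u. T (T u)) (mu^2)" for u
  proof -
    from uK have sm: "cl_smooth \<Omega> u" and ev: "\<And>x. x\<in>\<Omega> \<Longrightarrow> T (T u) x = cl_scale (mu^2) (u x)" unfolding ker_shift_def by blast+
    have smT: "cl_smooth \<Omega> (T u)" by (rule Tsm[OF sm])
    define u1 where "u1 = (\<lambda>y. cl_add (cl_scale (1/2) (u y)) (cl_scale (1/(2*mu)) (T u y)))"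
    define u2 where "u2 = (\<lambda>y. cl_add (cl_scale (1/2) (u y)) (cl_scale (-1/(2*mu)) (T u y)))"
    have k1: "u1 \<in> ker_shift \<Omega> T mu"
      unfolding ker_shift_def
    proof (intro CollectI conjI ballI)
      show "cl_smooth \<Omega> u1" unfolding u1_def by (rule lc_smooth[OF opn sm smT])
      fix x assume x: "x \<in> \<Omega>"
      have "T u1 x = cl_add (cl_scale (1/2) (T u x)) (cl_scale (1/(2*mu)) (T (T u) x))"
        unfolding u1_def by (rule Tlc[OF sm smT x])
      also have "\<dots> = cl_add (cl_scale (1/2) (T u x)) (cl_scale (1/(2*mu)) (cl_scale (mu^2) (u x)))"
        by (simp only: ev[OF x])
      also have "\<dots> = cl_scale mu (u1 x)" unfolding u1_def cl_add_def cl_scale_def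
      proof (rule ext)
        fix A
        show "1 / 2 * T u x A + 1 / (2 * mu) * (mu\<^sup>2 * u x A) = mu * (1 / 2 * u x A + 1 / (2 * mu) * T u x A)"
          using mu by (simp add: field_simps power2_eq_square)
      qed
      finally show "T u1 x = cl_scale mu (u1 x)" .
    qed
    have k2: "u2 \<in> ker_shift \<Omega> T (-mu)"
      unfolding ker_shift_def
    proof (intro CollectI conjI ballI)
      show "cl_smooth \<Omega> u2" unfolding u2_def by (rule lc_smooth[OF opn sm smT])
      fix x assume x: "x \<in> \<Omega>"
      have "T u2 x = cl_add (cl_scale (1/2) (T u x)) (cl_scale (-1/(2*mu)) (T (T u) x))"
        unfolding u2_def by (rule Tlc[OF sm smT x])
      also have "\<dots> = cl_add (cl_scale (1/2) (T u x)) (cl_scale (-1/(2*mu)) (cl_scale (mu^2) (u x)))"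
        by (simp only: ev[OF x])
      also have "\<dots> = cl_scale (-mu) (u2 x)" unfolding u2_def cl_add_def cl_scale_def
      proof (rule ext)
        fix A
        show "1 / 2 * T u x A + -1 / (2 * mu) * (mu\<^sup>2 * u x A) = -mu * (1 / 2 * u x A + -1 / (2 * mu) * T u x A)"
          using mu by (simp add: field_simps power2_eq_square)
      qed
      finally show "T u2 x = cl_scale (-mu) (u2 x)" .
    qed
    have "u x = cl_add (u1 x) (u2 x)" for x
      unfolding u1_def u2_def cl_add_def cl_scale_def
    proof (rule ext)
      fix A
      show "u x A = 1 / 2 * u x A + 1 / (2 * mu) * T u x A + (1 / 2 * u x A + -1 / (2 * mu) * T u x A)"
        by (simp add: field_simps)
    qed
    then show ?thesis using k1 k2 by blast
  qed
  have uniq: "\<forall>u1\<in>ker_shift \<Omega> T mu. \<forall>u2\<in>ker_shift \<Omega> T (-mu). (\<forall>x\<in>\<Omega>. u1 x = u2 x) \<longrightarrow> (\<forall>x\<in>\<Omega>. u1 x = cl_zero)"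
  proof (intro ballI impI)
    fix u1 u2 x assume that: "u1 \<in> ker_shift \<Omega> T mu" "u2 \<in> ker_shift \<Omega> T (-mu)" "\<forall>x\<in>\<Omega>. u1 x = u2 x"
      and x: "x \<in> \<Omega>"
    have "T u1 x = T u2 x" by (rule Tloc[OF that(3) x])
    moreover have "T u1 x = cl_scale mu (u1 x)" using that(1) x unfolding ker_shift_def by blast
    moreover have "T u2 x = cl_scale (-mu) (u2 x)" using that(2) x unfolding ker_shift_def by blast
    moreover have "u2 x = u1 x" using that(3) x by simp
    ultimately have eq: "cl_scale mu (u1 x) = cl_scale (-mu) (u1 x)" by simp
    show "u1 x = cl_zero" unfolding cl_zero_def
    proof (rule ext)
      fix A
      have "mu * u1 x A = - mu * u1 x A" using fun_cong[OF eq, of A] unfolding cl_scale_def by simp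
      then have "2 * mu * u1 x A = 0" by (simp add: algebra_simps)
      then show "u1 x A = 0" using mu by simp
    qed
  qed
  show ?thesis unfolding direct_sum_on_def
    apply (intro conjI sub1 sub2)
      apply (intro ballI dec, assumption)
    apply (rule uniq)
    done
qed




theorem theorem7p1:
  fixes \<Omega> :: "((real, 'n::{finite,linorder}) vec) set"
    and f :: "(real, 'n) vec \<Rightarrow> (real, 'n) vec"
    and lam :: complex
  assumes "even CARD('n)" and "odd (CARD('n) div 2)"
    and "open \<Omega>"
    and "vec_smooth \<Omega> f"
    and "lam \<noteq> 0"
  shows "direct_sum_on \<Omega> (ker_shift \<Omega> (\<lambda>u. opA f (opA f u)) (lam^2))
           (ker_dirac_M \<Omega> (-1) (\<lambda>x. cl_add (cl_vec (f x)) (cl_scale lam ieN)))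
           (ker_dirac_M \<Omega> (-1) (\<lambda>x. cl_sub (cl_vec (f x)) (cl_scale lam ieN)))
       \<and> direct_sum_on \<Omega> (ker_shift \<Omega> (\<lambda>u. opB f (opB f u)) (lam^2))
           (ker_dirac_M \<Omega> 1 (\<lambda>x. cl_sub (cl_vec (f x)) (cl_scale lam ieN)))
           (ker_dirac_M \<Omega> 1 (\<lambda>x. cl_add (cl_vec (f x)) (cl_scale lam ieN)))"
proof -
  have k1: "ker_dirac_M \<Omega> (-1) (\<lambda>x. cl_add (cl_vec (f x)) (cl_scale lam ieN)) = ker_shift \<Omega> (Tg (-1) f) lam"
    using kerM_eq[OF assms(1,2), of \<Omega> "-1" f lam] by simp
  have k2: "ker_dirac_M \<Omega> (-1) (\<lambda>x. cl_sub (cl_vec (f x)) (cl_scale lam ieN)) = ker_shift \<Omega> (Tg (-1) f) (-lam)"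
    unfolding sub_to_add using kerM_eq[OF assms(1,2), of \<Omega> "-1" f "-lam"] by simp
  have k3: "ker_dirac_M \<Omega> 1 (\<lambda>x. cl_sub (cl_vec (f x)) (cl_scale lam ieN)) = ker_shift \<Omega> (Tg 1 f) lam"
    unfolding sub_to_add using kerM_eq[OF assms(1,2), of \<Omega> 1 f "-lam"] by simp
  have k4: "ker_dirac_M \<Omega> 1 (\<lambda>x. cl_add (cl_vec (f x)) (cl_scale lam ieN)) = ker_shift \<Omega> (Tg 1 f) (-lam)"
    using kerM_eq[OF assms(1,2), of \<Omega> 1 f lam] by simp
  have ds: "direct_sum_on \<Omega> (ker_shift \<Omega> (\<lambda>u. Tg s f (Tg s f u)) (lam^2)) (ker_shift \<Omega> (Tg s f) lam) (ker_shift \<Omega> (Tg s f) (-lam))" for s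
  proof (rule abstract_ds[OF assms(3,5)])
    show "cl_smooth \<Omega> (Tg s f u)" if "cl_smooth \<Omega> u" for u by (rule Tg_smooth[OF assms(3) that assms(4)])
    show "Tg s f (\<lambda>y. cl_add (cl_scale a (u y)) (cl_scale b (v y))) x = cl_add (cl_scale a (Tg s f u x)) (cl_scale b (Tg s f v x))"
      if "cl_smooth \<Omega> u" "cl_smooth \<Omega> v" "x \<in> \<Omega>" for u v a b x by (rule Tg_lc[OF that(3,1,2)])
    show "Tg s f u x = Tg s f v x" if "\<forall>y\<in>\<Omega>. u y = v y" "x \<in> \<Omega>" for u v x by (rule Tg_local[OF assms(3) that])
  qed
  show ?thesis unfolding opA_Tg opB_Tg k1 k2 k3 k4 using ds by blast
qed


end
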